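(* Let $n\geq 2$ and let $k$ be a positive integer with $k+2^k-1\leq n$. For every prime number $p$ with $n-2^k+1\leq p\leq (n-k-2^k+3)2^k-3$, there is an arithmetical structure $(r_1,\dots,r_n)$ on $K_n$ with $r_1=p$.
   Context: An arithmetical structure on the complete graph $K_n$ is an $n$-tuple $(r_1,r_2,\dots,r_n)$ of positive integers with $\gcd(r_1,\dots,r_n)=1$ such that $r_j$ divides $\sum_{i=1}^n r_i$ for every $j$. The entries are always listed so that $r_1\geq r_2\geq\dots\geq r_n$; thus $r_1$ is the largest value of the structure. *)

theory Defs
  imports "HOL-Computational_Algebra.Primes"
begin

text \<open>An arithmetical structure on the complete graph K_n, given as a function r on
  indices 1..n (values outside are irrelevant), listed in non-increasing order.\<close>
definition arith_structure_Kn :: "nat \<Rightarrow> (nat \<Rightarrow> nat) \<Rightarrow> bool" where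
  "arith_structure_Kn n r \<longleftrightarrow>
     (\<forall>i\<in>{1..n}. r i > 0) \<and>
     Gcd (r ` {1..n}) = 1 \<and>
     (\<forall>j\<in>{1..n}. r j dvd (\<Sum>i=1..n. r i)) \<and>
     (\<forall>i j. 1 \<le> i \<longrightarrow> i \<le> j \<longrightarrow> j \<le> n \<longrightarrow> r j \<le> r i)"

end

theory Submission
  imports Defs
begin

lemma dvd_sum_list_aux: "(\<forall>x\<in>set xs. (d::nat) dvd x) \<Longrightarrow> d dvd sum_list xs"
  by (induction xs) auto

lemma ge_sum_list_aux: "(\<forall>x\<in>set xs. (c::nat) \<le> x) \<Longrightarrow> length xs * c \<le> sum_list xs"
  by (induction xs) auto

lemma parts:
  fixes j :: nat
  shows "j \<le> m \<Longrightarrow> m \<le> T \<Longrightarrow> T + 2 \<le> 2^j * (m + 2 - j) \<Longrightarrow>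
    \<exists>xs. length xs = m \<and> (\<forall>x\<in>set xs. \<exists>e\<le>j. x = 2^e) \<and> sum_list xs = T \<and> sorted_wrt (\<ge>) xs"
proof (induction j arbitrary: m T)
  case 0
  then have "T = m" by simp
  then show ?case
    by (intro exI[of _ "replicate m 1"]) (auto simp: sum_list_replicate sorted_wrt_iff_nth_less)
next
  case (Suc j)
  note IHj = Suc.IH
  have "\<forall>T. Suc j \<le> m \<longrightarrow> m \<le> T \<longrightarrow> T + 2 \<le> 2^Suc j * (m + 2 - Suc j) \<longrightarrow>
    (\<exists>xs. length xs = m \<and> (\<forall>x\<in>set xs. \<exists>e\<le>Suc j. x = 2^e) \<and> sum_list xs = T \<and> sorted_wrt (\<ge>) xs)" for m
  proof (induction m)
    case 0
    then show ?case by simp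
  next
    case (Suc m')
    note IHm = Suc.IH
    show ?case
    proof (intro allI impI)
      fix T assume a1: "Suc j \<le> Suc m'" and a2: "Suc m' \<le> T"
        and a3: "T + 2 \<le> 2^Suc j * (Suc m' + 2 - Suc j)"
      have le: "\<And>ys. \<forall>x\<in>set ys. \<exists>e\<le>Suc j. x = 2^e \<Longrightarrow> \<forall>y\<in>set ys. y \<le> (2::nat)^Suc j"
        using power_increasing[of _ "Suc j" "2::nat"] by fastforce
      consider (B) "T < 2^Suc j + m'" | (A1) "T \<ge> 2^Suc j + m'" "Suc j \<le> m'"
        | (A2) "T \<ge> 2^Suc j + m'" "m' = j" using a1 by linarith
      then show "\<exists>xs. length xs = Suc m' \<and> (\<forall>x\<in>set xs. \<exists>e\<le>Suc j. x = 2^e) \<and> sum_list xs = T \<and> sorted_wrt (\<ge>) xs"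
      proof cases
        case B
        obtain t where t: "m' = j + t" using a1 le_Suc_ex by (metis Suc_le_mono)
        have "j + 1 \<le> (2::nat)^j" using less_exp[of j] by (simp add: Suc_le_eq)
        then have "(j+1)*(t+1) \<le> 2^j * (t+1)" using mult_le_mono1 by blast
        then have "T + 2 \<le> 2^j * (Suc m' + 2 - j)" using B t by (simp add: algebra_simps)
        then obtain xs where xs: "length xs = Suc m'" "\<forall>x\<in>set xs. \<exists>e\<le>j. x = 2^e" "sum_list xs = T" "sorted_wrt (\<ge>) xs"
          using IHj[of "Suc m'" T] a1 a2 by auto
        then show ?thesis by (intro exI[of _ xs]) (auto intro: le_SucI)
      next
        case A1
        have "T - 2^Suc j + 2 \<le> 2^Suc j * (m' + 2 - Suc j)"
        proof -
          have "Suc m' + 2 - Suc j = (m' + 2 - Suc j) + 1" using A1 by simp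
          then show ?thesis using a3 A1 by (simp add: algebra_simps)
        qed
        moreover have "m' \<le> T - 2^Suc j" using A1 by linarith
        ultimately obtain ys where ys: "length ys = m'" "\<forall>x\<in>set ys. \<exists>e\<le>Suc j. x = 2^e" "sum_list ys = T - 2^Suc j" "sorted_wrt (\<ge>) ys"
          using IHm[rule_format, OF A1(2)] by blast
        show ?thesis using ys le[OF ys(2)] A1
          by (intro exI[of _ "2^Suc j # ys"]) auto
      next
        case A2
        have "T - 2^Suc j + 2 \<le> 2^j * (j + 2 - j)" using a3 A2 by simp
        moreover have "j \<le> T - 2^Suc j" using A2 by linarith
        ultimately obtain ys where ys: "length ys = j" "\<forall>x\<in>set ys. \<exists>e\<le>j. x = 2^e" "sum_list ys = T - 2^Suc j" "sorted_wrt (\<ge>) ys"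
          using IHj[of j "T - 2^Suc j"] by auto
        have ys2: "\<forall>x\<in>set ys. \<exists>e\<le>Suc j. x = 2^e" using ys(2) le_SucI by blast
        show ?thesis using ys ys2 le[OF ys2] A2
          by (intro exI[of _ "2^Suc j # ys"]) auto
      qed
    qed
  qed
  then show ?case using Suc.prems by blast
qed

theorem proposition2p5:
  fixes n k p :: nat
  assumes "n \<ge> 2" and "k \<ge> 1" and "k + 2^k - 1 \<le> n"
    and "prime p"
    and "int n - 2^k + 1 \<le> int p"
    and "int p \<le> (int n - int k - 2^k + 3) * 2^k - 3"
  shows "\<exists>r. arith_structure_Kn n r \<and> r 1 = p"
proof -
  define K :: nat where "K = 2^k"
  define m where "m = n + 1 - K"
  have K2: "K \<ge> 2" unfolding K_def using power_increasing[of 1 k "2::nat"] assms(2) by simp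
  have Kn: "k + K \<le> n + 1" using assms(3) K2 unfolding K_def by linarith
  have mk: "k \<le> m" using Kn unfolding m_def by linarith
  have iK: "int K = 2^k" unfolding K_def by simp
  have a5: "int n - int K + 1 \<le> int p" using assms(5) iK by simp
  have mp: "m \<le> p" using a5 Kn unfolding m_def by linarith
  have up: "int p + 3 \<le> (int m + 2 - int k) * int K"
    using assms(6) Kn unfolding m_def iK[symmetric] by (simp add: of_nat_diff algebra_simps)
  have "p + 2 \<le> K * (m + 2 - k)"
  proof -
    have "int (K * (m + 2 - k)) = int K * (int m + 2 - int k)" using mk by (simp add: of_nat_diff)
    then show ?thesis using up by (simp add: algebra_simps)
  qed
  then obtain xs where xs: "length xs = m" "\<forall>x\<in>set xs. \<exists>e\<le>k. x = 2^e"
     "sum_list xs = p" "sorted_wrt (\<ge>) xs"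
    using parts[of k m p] mk mp unfolding K_def by auto
  have p2: "p \<ge> 2" using assms(4) prime_ge_2_nat by blast
  have m2: "m \<ge> 2"
  proof (rule ccontr)
    assume "\<not> m \<ge> 2"
    then have "m = 1" "k = 1" using mk assms(2) by auto
    then have "n = 2" "K = 2" using Kn K2 m_def K_def by auto
    then show False using assms(6) p2 \<open>k = 1\<close> by simp
  qed
  have one: "1 \<in> set xs"
  proof (rule ccontr)
    assume no: "1 \<notin> set xs"
    have ev: "\<forall>x\<in>set xs. 2 dvd x \<and> x \<ge> 2"
    proof
      fix x assume "x \<in> set xs"
      then obtain e where "x = 2^e" "x \<noteq> 1" using xs(2) no by metis
      then have "e \<ge> 1" by (cases e) auto
      have "(2::nat) dvd 2^e" using \<open>e \<ge> 1\<close> by (simp add: dvd_power)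
      moreover have "(2::nat)^1 \<le> 2^e" using \<open>e \<ge> 1\<close> by (rule power_increasing) simp
      ultimately show "2 dvd x \<and> x \<ge> 2" using \<open>x = 2^e\<close> by simp
    qed
    then have "2 dvd p" using xs(3) by (metis dvd_sum_list_aux)
    then have "p = 2" using assms(4) by (metis prime_nat_iff numeral_eq_one_iff semiring_norm(85))
    have "2 * m \<le> sum_list xs" using ev xs(1)
      using ge_sum_list_aux[of xs 2] by (simp add: mult.commute)
    then show False using m2 xs(3) \<open>p = 2\<close> by linarith
  qed
  define r where "r i = (if i < K then p else xs ! (i - K))" for i
  have elem_le: "\<forall>x\<in>set xs. x \<le> p" using xs(3) member_le_sum_list by blast
  have nm: "n = m + K - 1" unfolding m_def using Kn by linarith
  have sumr: "(\<Sum>i=1..n. r i) = K * p"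
  proof -
    have "{1..n} = {1..<K+m}" using nm K2 by auto
    then have "(\<Sum>i=1..n. r i) = (\<Sum>i=1..<K+m. r i)" by simp
    also have "\<dots> = (\<Sum>i=1..<K. r i) + (\<Sum>i=K..<K+m. r i)"
      using K2 by (intro sum.atLeastLessThan_concat[symmetric]) auto
    also have "(\<Sum>i=1..<K. r i) = (\<Sum>i=1..<K. p)" unfolding r_def by simp
    also have "\<dots> = (K - 1) * p" by simp
    also have "(\<Sum>i=K..<K+m. r i) = (\<Sum>i=0+K..<m+K. xs ! (i - K))"
    proof (rule sum.cong)
      show "{K..<K+m} = {0+K..<m+K}" by (simp add: add.commute)
    next
      fix i assume "i \<in> {0+K..<m+K}"
      then show "r i = xs ! (i - K)" unfolding r_def by simp
    qed
    also have "\<dots> = (\<Sum>i=0..<m. xs ! i)" by (subst sum.shift_bounds_nat_ivl) simp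
    also have "\<dots> = p" using xs(1,3) by (simp add: sum_list_sum_nth)
    finally show ?thesis using K2 by (simp add: algebra_simps)
  qed
  have "arith_structure_Kn n r"
    unfolding arith_structure_Kn_def
  proof (intro conjI ballI allI impI)
    fix i assume "i \<in> {1..n}"
    show "r i > 0"
    proof (cases "i < K")
      case True then show ?thesis using p2 unfolding r_def by simp
    next
      case False
      then have "i - K < length xs" using \<open>i \<in> {1..n}\<close> nm xs(1) by auto
      then have "xs ! (i - K) \<in> set xs" by simp
      then show ?thesis using xs(2) False unfolding r_def by fastforce
    qed
  next
    obtain idx where "idx < m" "xs ! idx = 1" using one xs(1) by (metis in_set_conv_nth)
    moreover have iK1: "idx + K \<in> {1..n}" using nm K2 \<open>idx < m\<close> by auto
    have "r (idx + K) \<in> r ` {1..n}" using iK1 by (rule imageI)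
    moreover have "r (idx + K) = 1" unfolding r_def using \<open>xs ! idx = 1\<close> by simp
    ultimately have "Gcd (r ` {1..n}) dvd 1" by (metis Gcd_dvd)
    then show "Gcd (r ` {1..n}) = 1" by simp
  next
    fix j assume "j \<in> {1..n}"
    show "r j dvd (\<Sum>i=1..n. r i)"
    proof (cases "j < K")
      case True then show ?thesis unfolding sumr unfolding r_def by simp
    next
      case False
      then have "j - K < length xs" using \<open>j \<in> {1..n}\<close> nm xs(1) by auto
      then have "xs ! (j - K) \<in> set xs" by simp
      then obtain e where e: "e \<le> k" "xs ! (j - K) = 2^e" using xs(2) by blast
      then have "xs ! (j - K) dvd K" unfolding K_def by (simp add: le_imp_power_dvd)
      then show ?thesis unfolding sumr using False unfolding r_def by simp
    qed
  next
    fix i j assume "1 \<le> i" "i \<le> j" "j \<le> n"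
    show "r j \<le> r i"
    proof (cases "j < K")
      case True then show ?thesis using \<open>i \<le> j\<close> unfolding r_def by simp
    next
      case False
      then have jl: "j - K < length xs" using \<open>j \<le> n\<close> nm xs(1) K2 by auto
      then have "xs ! (j - K) \<in> set xs" by simp
      then have "xs ! (j - K) \<le> p" using elem_le by blast
      show ?thesis
      proof (cases "i < K")
        case True then show ?thesis using False \<open>xs ! (j - K) \<le> p\<close> unfolding r_def by simp
      next
        case F2: False
        have "xs ! (j - K) \<le> xs ! (i - K)"
        proof (cases "i = j")
          case False
          then have "i - K < j - K" using \<open>i \<le> j\<close> F2 by linarith
          then show ?thesis using xs(4) jl by (simp add: sorted_wrt_iff_nth_less)
        qed simp
        then show ?thesis using F2 False unfolding r_def by simp
      qed
    qed
  qed
  moreover have "r 1 = p" using K2 unfolding r_def by simp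
  ultimately show ?thesis by (intro exI[of _ r]) simp
qed

end
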